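(* $\mathfrak{L}(\mathrm{rtDVA}(1))\subsetneq\bigcup_{k}\mathfrak{L}(\mathrm{rtD}k\mathrm{CA})$.
   Context: $\mathfrak{L}(A)$ denotes the class of languages recognized by machines of type $A$. A real-time deterministic vector automaton of dimension $k$ ($\mathrm{rtDVA}(k)$) is a 6-tuple $(Q,\Sigma,\delta,q_0,Q_a,v)$ with finite state set $Q$, initial state $q_0$, accept states $Q_a$, initial row vector $v\in\mathbb{Q}^k$ (freely chosen), and $\delta:Q\times(\Sigma\cup\{\cent,\$\})\times\{=,\neq\}\to Q\times S$, $S$ the set of $k\times k$ rational matrices. The input $w$ is read as $\cent w\$$ left to right, one symbol per step; in state $q$ reading $\sigma$, with $\omega$ equal to "$=$" iff the first vector entry equals $1$, if $\delta(q,\sigma,\omega)=(q',M)$ the machine goes to $q'$ and multiplies its row vector on the right by $M$. Acceptance: after processing $\$$, the state is in $Q_a$ and the first vector entry equals $1$. A real-time deterministic $k$-counter automaton (rtD$k$CA) is a 5-tuple $(Q,\Sigma,\delta,q_0,Q_a)$ with $k$ integer counters initially $0$, reading $\cent w\$$ one symbol per step; $\delta(q,\sigma,\theta)=(q',c)$ with $\theta\in\{0,\pm\}^k$ the zero/nonzero status of each counter and $c\in\{-1,0,1\}^k$ the counter increments; acceptance iff in an accept state after scanning $\$$. The union ranges over all $k\ge 1$. *)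

theory Defs
  imports Complex_Main
begin

text \<open>Alphabets are finite nonempty sets of natural numbers (any finite alphabet
  is isomorphic to one of these), so language classes can range over all alphabets.\<close>

datatype 'a tsym = Cent | Dollar | Sym 'a

definition tape_syms :: "'a set \<Rightarrow> 'a tsym set" where
  "tape_syms \<Sigma> = {Cent, Dollar} \<union> Sym ` \<Sigma>"

definition tape :: "'a list \<Rightarrow> 'a tsym list" where
  "tape w = Cent # map Sym w @ [Dollar]"

text \<open>Row vectors of dimension k are functions nat => rat (entries with index < k
  matter); k x k matrices are functions nat => nat => rat. Row vector times matrix:\<close>

definition vecmat :: "nat \<Rightarrow> (nat \<Rightarrow> rat) \<Rightarrow> (nat \<Rightarrow> nat \<Rightarrow> rat) \<Rightarrow> (nat \<Rightarrow> rat)" where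
  "vecmat k v M = (\<lambda>j. \<Sum>i<k. v i * M i j)"

type_synonym dva_trans = "nat \<Rightarrow> nat tsym \<Rightarrow> bool \<Rightarrow> nat \<times> (nat \<Rightarrow> nat \<Rightarrow> rat)"

text \<open>The boolean argument of the transition function is \<open>True\<close> iff the first vector entry equals 1
  (i.e. omega is "=").\<close>

definition dva_step :: "nat \<Rightarrow> dva_trans \<Rightarrow> nat \<times> (nat \<Rightarrow> rat) \<Rightarrow> nat tsym \<Rightarrow> nat \<times> (nat \<Rightarrow> rat)" where
  "dva_step k \<delta> c \<sigma> = (let (q, v) = c; (q', M) = \<delta> q \<sigma> (v 0 = 1) in (q', vecmat k v M))"

definition dva_run :: "nat \<Rightarrow> dva_trans \<Rightarrow> nat \<Rightarrow> (nat \<Rightarrow> rat) \<Rightarrow> nat list \<Rightarrow> nat \<times> (nat \<Rightarrow> rat)" where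
  "dva_run k \<delta> q0 v w = foldl (dva_step k \<delta>) (q0, v) (tape w)"

definition dva_accepts :: "nat \<Rightarrow> dva_trans \<Rightarrow> nat \<Rightarrow> nat set \<Rightarrow> (nat \<Rightarrow> rat) \<Rightarrow> nat list \<Rightarrow> bool" where
  "dva_accepts k \<delta> q0 Qa v w = (let (q, u) = dva_run k \<delta> q0 v w in q \<in> Qa \<and> u 0 = 1)"

definition is_rtDVA :: "nat \<Rightarrow> nat set \<Rightarrow> nat set \<Rightarrow> dva_trans \<Rightarrow> nat \<Rightarrow> nat set \<Rightarrow> bool" where
  "is_rtDVA k \<Sigma> Q \<delta> q0 Qa \<longleftrightarrow> finite Q \<and> q0 \<in> Q \<and> Qa \<subseteq> Q \<and>
     (\<forall>q\<in>Q. \<forall>\<sigma>\<in>tape_syms \<Sigma>. \<forall>\<omega>. fst (\<delta> q \<sigma> \<omega>) \<in> Q)"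

definition L_rtDVA :: "nat \<Rightarrow> (nat set \<times> nat list set) set" where
  "L_rtDVA k = {(\<Sigma>, L). finite \<Sigma> \<and> \<Sigma> \<noteq> {} \<and>
     (\<exists>Q \<delta> q0 Qa v. is_rtDVA k \<Sigma> Q \<delta> q0 Qa \<and>
        L = {w \<in> lists \<Sigma>. dva_accepts k \<delta> q0 Qa v w})}"

text \<open>The status argument is the list (length k) recording for each counter whether it is zero;
  the result gives the new state and the increments (in {-1,0,1}) of counters 0..k-1.\<close>

type_synonym ca_trans = "nat \<Rightarrow> nat tsym \<Rightarrow> bool list \<Rightarrow> nat \<times> (nat \<Rightarrow> int)"

definition ca_step :: "nat \<Rightarrow> ca_trans \<Rightarrow> nat \<times> (nat \<Rightarrow> int) \<Rightarrow> nat tsym \<Rightarrow> nat \<times> (nat \<Rightarrow> int)" where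
  "ca_step k \<delta> c \<sigma> = (let (q, cnt) = c; (q', d) = \<delta> q \<sigma> (map (\<lambda>i. cnt i = 0) [0..<k])
     in (q', \<lambda>i. if i < k then cnt i + d i else cnt i))"

definition ca_accepts :: "nat \<Rightarrow> ca_trans \<Rightarrow> nat \<Rightarrow> nat set \<Rightarrow> nat list \<Rightarrow> bool" where
  "ca_accepts k \<delta> q0 Qa w = (fst (foldl (ca_step k \<delta>) (q0, \<lambda>_. 0) (tape w)) \<in> Qa)"

definition is_rtDCA :: "nat \<Rightarrow> nat set \<Rightarrow> nat set \<Rightarrow> ca_trans \<Rightarrow> nat \<Rightarrow> nat set \<Rightarrow> bool" where
  "is_rtDCA k \<Sigma> Q \<delta> q0 Qa \<longleftrightarrow> finite Q \<and> q0 \<in> Q \<and> Qa \<subseteq> Q \<and>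
     (\<forall>q\<in>Q. \<forall>\<sigma>\<in>tape_syms \<Sigma>. \<forall>\<theta>. length \<theta> = k \<longrightarrow>
        fst (\<delta> q \<sigma> \<theta>) \<in> Q \<and> (\<forall>i<k. snd (\<delta> q \<sigma> \<theta>) i \<in> {-1, 0, 1}))"

definition L_rtDCA :: "nat \<Rightarrow> (nat set \<times> nat list set) set" where
  "L_rtDCA k = {(\<Sigma>, L). finite \<Sigma> \<and> \<Sigma> \<noteq> {} \<and>
     (\<exists>Q \<delta> q0 Qa. is_rtDCA k \<Sigma> Q \<delta> q0 Qa \<and>
        L = {w \<in> lists \<Sigma>. ca_accepts k \<delta> q0 Qa w})}"

end

theory Submission
  imports Defs "HOL-Computational_Algebra.Primes" "HOL-Library.Countable"
begin


definition qval :: "int \<Rightarrow> rat \<Rightarrow> int" where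
  "qval p x = (case quotient_of x of (a, b) \<Rightarrow> int (multiplicity p a) - int (multiplicity p b))"

lemma qval_frac:
  assumes p: "prime p" and a: "a \<noteq> 0" and b: "b \<noteq> 0" and x: "x = of_int a / of_int b"
  shows "qval p x = int (multiplicity p a) - int (multiplicity p b)"
proof -
  obtain a' b' where q: "quotient_of x = (a', b')" by (cases "quotient_of x") auto
  have b'0: "b' > 0" using q quotient_of_denom_pos by blast
  have xe: "x = of_int a' / of_int b'" using q quotient_of_div by blast
  have "x \<noteq> 0" using x a b by simp
  hence a'0: "a' \<noteq> 0" using xe by auto
  have "of_int a / of_int b = (of_int a' / of_int b' :: rat)" using x xe by simp
  hence "of_int (a * b') = (of_int (a' * b) :: rat)" using b b'0
    by (simp add: field_simps)
  hence e: "a * b' = a' * b" by linarith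
  have pe: "prime_elem p" using p by (rule prime_imp_prime_elem)
  have "multiplicity p (a * b') = multiplicity p a + multiplicity p b'"
    using pe a b'0 by (simp add: prime_elem_multiplicity_mult_distrib)
  moreover have "multiplicity p (a' * b) = multiplicity p a' + multiplicity p b"
    using pe a'0 b by (simp add: prime_elem_multiplicity_mult_distrib)
  ultimately have "multiplicity p a + multiplicity p b' = multiplicity p a' + multiplicity p b"
    using e by simp
  thus ?thesis using q by (simp add: qval_def)
qed

lemma qval_zero[simp]: "qval p 0 = 0"
  by (simp add: qval_def)

lemma qval_mult:
  assumes p: "prime p" and "x \<noteq> 0" "y \<noteq> 0"
  shows "qval p (x * y) = qval p x + qval p y"
proof -
  obtain a b where q: "quotient_of x = (a, b)" by (cases "quotient_of x") auto
  obtain c d where q2: "quotient_of y = (c, d)" by (cases "quotient_of y") auto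
  have b: "b > 0" using q quotient_of_denom_pos by blast
  have d: "d > 0" using q2 quotient_of_denom_pos by blast
  have xe: "x = of_int a / of_int b" using q quotient_of_div by blast
  have ye: "y = of_int c / of_int d" using q2 quotient_of_div by blast
  have a: "a \<noteq> 0" using xe assms by auto
  have c: "c \<noteq> 0" using ye assms by auto
  have xy: "x * y = of_int (a*c) / of_int (b*d)" using xe ye by simp
  have "qval p (x*y) = int (multiplicity p (a*c)) - int (multiplicity p (b*d))"
    using qval_frac[OF p _ _ xy] a b c d by simp
  also have "\<dots> = (int (multiplicity p a) - int (multiplicity p b)) + (int (multiplicity p c) - int (multiplicity p d))"
    using prime_elem_multiplicity_mult_distrib[OF prime_imp_prime_elem[OF p]] a b c d by simp
  also have "\<dots> = qval p x + qval p y"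
    using qval_frac[OF p a _ xe] qval_frac[OF p c _ ye] b d by simp
  finally show ?thesis .
qed

lemma qval_one: "prime p \<Longrightarrow> qval p 1 = 0"
  using qval_frac[of p 1 1 1] by simp

lemma qval_nz_dvd:
  assumes p: "prime p" and nz: "qval p x \<noteq> 0" and q: "quotient_of x = (a, b)"
  shows "p dvd a \<or> p dvd b"
proof (rule ccontr)
  assume "\<not> (p dvd a \<or> p dvd b)"
  hence "multiplicity p a = 0" "multiplicity p b = 0" by (auto intro: not_dvd_imp_multiplicity_0)
  thus False using nz q by (simp add: qval_def)
qed

lemma finite_qval_support: "finite {p. prime p \<and> qval p x \<noteq> 0}"
proof -
  obtain a b where q: "quotient_of x = (a, b)" by (cases "quotient_of x") auto
  show ?thesis
  proof (cases "x = 0")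
    case True thus ?thesis by simp
  next
    case False
    have b: "b > 0" using q quotient_of_denom_pos by blast
    have xe: "x = of_int a / of_int b" using q quotient_of_div by blast
    have a: "a \<noteq> 0" using xe False by auto
    have "{p. prime p \<and> qval p x \<noteq> 0} \<subseteq> {0..\<bar>a\<bar>} \<union> {0..\<bar>b\<bar>}"
    proof
      fix p assume "p \<in> {p. prime p \<and> qval p x \<noteq> 0}"
      hence pp: "prime p" and "p dvd a \<or> p dvd b" using qval_nz_dvd q by auto
      moreover have "p > 0" using pp prime_gt_0_int by blast
      ultimately show "p \<in> {0..\<bar>a\<bar>} \<union> {0..\<bar>b\<bar>}"
        using a b dvd_imp_le_int[of a p] dvd_imp_le_int[of b p] by auto
    qed
    thus ?thesis by (rule finite_subset) auto
  qed
qed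

lemma no_prime_unit: 
  fixes a :: int
  assumes "a > 0" "\<And>p. prime p \<Longrightarrow> \<not> p dvd a" shows "a = 1"
proof (rule ccontr)
  assume "a \<noteq> 1"
  hence "\<not> is_unit a" using assms(1) by auto
  then obtain p where "prime p" "p dvd a" using prime_divisor_exists[of a] assms(1) by auto
  thus False using assms(2) by blast
qed

lemma qval_one_iff:
  assumes "x > 0" "\<And>p. prime p \<Longrightarrow> qval p x = 0"
  shows "x = 1"
proof -
  obtain a b where q: "quotient_of x = (a, b)" by (cases "quotient_of x") auto
  have b: "b > 0" using q quotient_of_denom_pos by blast
  have xe: "x = of_int a / of_int b" using q quotient_of_div by blast
  have a: "a > 0" using xe assms(1) b by (simp add: zero_less_divide_iff)
  have cop: "coprime a b" using q quotient_of_coprime by blast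
  have m: "multiplicity p a = multiplicity p b" if "prime p" for p
    using assms(2)[OF that] q by (simp add: qval_def)
  have nd: "\<not> p dvd a \<and> \<not> p dvd b" if pp: "prime p" for p
  proof
    show "\<not> p dvd a"
    proof
      assume d: "p dvd a"
      hence "multiplicity p a \<ge> 1" using a pp multiplicity_gt_zero_iff[of a p] pp prime_gt_1_int[OF pp] by simp
      hence "multiplicity p b \<ge> 1" using m[OF pp] by simp
      hence "p dvd b" using b pp multiplicity_gt_zero_iff[of b p] pp prime_gt_1_int[OF pp] by simp
      thus False using d cop pp by (meson coprime_common_divisor not_prime_unit)
    qed
    show "\<not> p dvd b"
    proof
      assume d: "p dvd b"
      hence "multiplicity p b \<ge> 1" using b pp multiplicity_gt_zero_iff[of b p] pp prime_gt_1_int[OF pp] by simp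
      hence "multiplicity p a \<ge> 1" using m[OF pp] by simp
      hence "p dvd a" using a pp multiplicity_gt_zero_iff[of a p] pp prime_gt_1_int[OF pp] by simp
      thus False using d cop pp by (meson coprime_common_divisor not_prime_unit)
    qed
  qed
  have "a = 1" using no_prime_unit[OF a] nd by blast
  moreover have "b = 1" using no_prime_unit[OF b] nd by blast
  ultimately show ?thesis using xe by simp
qed




definition wstep :: "int \<Rightarrow> int \<Rightarrow> bool \<Rightarrow> int \<Rightarrow> int \<Rightarrow> int \<times> int" where
  "wstep R K cz r d = (let t = r + d in
     if cz then (if t > R then (t - K, 1) else if t < -R then (t + K, -1) else (t, 0))
     else if r > 0 then (if t > R then (t - K, 1) else if t \<le> R - K then (t + K, -1) else (t, 0))
     else (if t < -R then (t + K, -1) else if t \<ge> K - R then (t - K, 1) else (t, 0)))"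

definition winv :: "int \<Rightarrow> int \<Rightarrow> int \<Rightarrow> int \<Rightarrow> int \<Rightarrow> bool" where
  "winv R K y r c \<longleftrightarrow> y = r + K * c \<and> \<bar>r\<bar> \<le> R \<and> (c > 0 \<longrightarrow> R - K < r) \<and> (c < 0 \<longrightarrow> r < K - R)"

lemma wstep_bounds:
  assumes "K \<le> R" "\<bar>r\<bar> \<le> R" "\<bar>d\<bar> \<le> K"
  shows "\<bar>fst (wstep R K cz r d)\<bar> \<le> R \<and> snd (wstep R K cz r d) \<in> {-1, 0, 1}"
  using assms unfolding wstep_def Let_def by auto

lemma Kc_facts:
  fixes K c :: int assumes "K > 0"
  shows "(c > 0 \<longrightarrow> K * c \<ge> K) \<and> (c < 0 \<longrightarrow> K * c \<le> -K) \<and> (c = 0 \<longrightarrow> K * c = 0)"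
proof -
  have "c > 0 \<longrightarrow> K * c \<ge> K * 1" using assms by (intro impI mult_left_mono) auto
  moreover have "c < 0 \<longrightarrow> K * c \<le> K * (-1)" using assms by (intro impI mult_left_mono) auto
  ultimately show ?thesis by auto
qed

lemma wstep_inv:
  assumes K: "0 < K" "K \<le> R" and inv: "winv R K y r c" and d: "\<bar>d\<bar> \<le> K"
  shows "winv R K (y + d) (fst (wstep R K (c = 0) r d)) (c + snd (wstep R K (c = 0) r d))"
    and "y + d = 0 \<longleftrightarrow> c = 0 \<and> r + d = 0"
proof -
  have kc: "(c > 0 \<longrightarrow> K * c \<ge> K) \<and> (c < 0 \<longrightarrow> K * c \<le> -K) \<and> (c = 0 \<longrightarrow> K * c = 0)"
    using Kc_facts[OF K(1)] by blast
  have d1: "K * (c + 1) = K * c + K" "K * (c - 1) = K * c - K" "K * (c + -1) = K * c - K" "K * (c + 0) = K * c"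
    by (auto simp: algebra_simps)
  have kc1: "(c + 1 > 0 \<longrightarrow> K * (c+1) \<ge> K) \<and> (c - 1 < 0 \<longrightarrow> K * (c - 1) \<le> -K)"
    using Kc_facts[OF K(1), of "c+1"] Kc_facts[OF K(1), of "c - 1"] by blast
  show "winv R K (y + d) (fst (wstep R K (c = 0) r d)) (c + snd (wstep R K (c = 0) r d))"
  proof (cases "c = 0")
    case True
    thus ?thesis using inv d K unfolding winv_def wstep_def Let_def by auto
  next
    case False
    thus ?thesis using inv d K kc kc1 unfolding winv_def wstep_def Let_def
      by (simp add: ring_distribs split: if_split) arith
  qed
  show "y + d = 0 \<longleftrightarrow> c = 0 \<and> r + d = 0"
  proof -
    have e: "y = r + K * c" "\<bar>r\<bar> \<le> R" "c > 0 \<longrightarrow> R - K < r" "c < 0 \<longrightarrow> r < K - R"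
      using inv unfolding winv_def by auto
    consider "c > 0" | "c = 0" | "c < 0" by linarith
    thus ?thesis
    proof cases
      case 1
      hence "K * c \<ge> K" using kc by blast
      hence "y + d > 0" using 1 e d K by linarith
      thus ?thesis using 1 by auto
    next
      case 2 thus ?thesis using e kc d K by auto
    next
      case 3
      hence "K * c \<le> -K" using kc by blast
      hence "y + d < 0" using 3 e d K by linarith
      thus ?thesis using 3 by auto
    qed
  qed
qed




definition sc :: "dva_trans \<Rightarrow> nat \<Rightarrow> nat tsym \<Rightarrow> bool \<Rightarrow> rat" where
  "sc \<delta> q \<sigma> \<omega> = snd (\<delta> q \<sigma> \<omega>) 0 0"

definition sstep :: "dva_trans \<Rightarrow> nat \<times> rat \<Rightarrow> nat tsym \<Rightarrow> nat \<times> rat" where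
  "sstep \<delta> c \<sigma> = (fst (\<delta> (fst c) \<sigma> (snd c = 1)), snd c * sc \<delta> (fst c) \<sigma> (snd c = 1))"

lemma red_step: "(fst (dva_step 1 \<delta> c \<sigma>), snd (dva_step 1 \<delta> c \<sigma>) 0) = sstep \<delta> (fst c, snd c 0) \<sigma>"
  by (cases c; cases "\<delta> (fst c) \<sigma> (snd c 0 = 1)") (simp add: dva_step_def sstep_def sc_def vecmat_def)

lemma red_foldl: "(fst (foldl (dva_step 1 \<delta>) c xs), snd (foldl (dva_step 1 \<delta>) c xs) 0) = foldl (sstep \<delta>) (fst c, snd c 0) xs"
proof (induction xs arbitrary: c)
  case Nil thus ?case by simp
next
  case (Cons a xs)
  show ?case using Cons.IH[of "dva_step 1 \<delta> c a"] red_step[of \<delta> c a] by simp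
qed

lemma dva_accepts_sstep:
  "dva_accepts 1 \<delta> q0 Qa v w \<longleftrightarrow>
     fst (foldl (sstep \<delta>) (q0, v 0) (tape w)) \<in> Qa \<and> snd (foldl (sstep \<delta>) (q0, v 0) (tape w)) = 1"
  using red_foldl[of \<delta> "(q0, v)" "tape w"]
  by (cases "dva_run 1 \<delta> q0 v w") (auto simp: dva_accepts_def dva_run_def dest: sym)

lemma tape_syms_tape: "w \<in> lists \<Sigma> \<Longrightarrow> set (tape w) \<subseteq> tape_syms \<Sigma>"
  by (auto simp: tape_def tape_syms_def)

lemma finite_tape_syms: "finite \<Sigma> \<Longrightarrow> finite (tape_syms \<Sigma>)"
  by (simp add: tape_syms_def)

lemma sstep_closed:
  assumes "is_rtDVA k \<Sigma> Q \<delta> q0 Qa" "fst c \<in> Q" "set xs \<subseteq> tape_syms \<Sigma>"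
  shows "fst (foldl (sstep \<delta>) c xs) \<in> Q"
  using assms(2,3)
proof (induction xs arbitrary: c)
  case Nil thus ?case by simp
next
  case (Cons a xs)
  have "fst (sstep \<delta> c a) \<in> Q" using assms(1) Cons.prems by (simp add: is_rtDVA_def sstep_def)
  thus ?case using Cons by simp
qed

definition zs :: "rat \<Rightarrow> int" where
  "zs x = (if x > 0 then 1 else if x < 0 then -1 else 0)"

lemma zs_mult: "zs (x * y) = zs x * zs y"
  by (auto simp: zs_def zero_less_mult_iff mult_less_0_iff)

lemma zs_range: "zs x \<in> {-1, 0, 1}" by (simp add: zs_def)

locale sim =
  fixes \<Sigma> :: "nat set" and Q :: "nat set" and \<delta> :: dva_trans and q0 :: nat and Qa :: "nat set" and x0 :: rat
  assumes fin\<Sigma>: "finite \<Sigma>" and dva: "is_rtDVA 1 \<Sigma> Q \<delta> q0 Qa"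
begin

definition S :: "rat set" where
  "S = (\<lambda>(q, \<sigma>, \<omega>). sc \<delta> q \<sigma> \<omega>) ` (Q \<times> tape_syms \<Sigma> \<times> UNIV)"

definition P :: "int set" where
  "P = {p. prime p \<and> (\<exists>s \<in> insert x0 S. qval p s \<noteq> 0)}"

definition ps :: "int list" where "ps = sorted_list_of_set P"
definition n :: nat where "n = length ps"
definition K :: int where "K = 1 + (\<Sum>p\<in>P. \<Sum>s\<in>S. \<bar>qval p s\<bar>)"
definition R :: int where "R = K + (\<Sum>p\<in>P. \<bar>qval p x0\<bar>)"
definition clip :: "int \<Rightarrow> int" where "clip d = max (-K) (min K d)"
definition Rset :: "int list set" where "Rset = {rs. length rs = n \<and> set rs \<subseteq> {-R..R}}"

definition Q' :: "nat set" where
  "Q' = to_nat ` (Q \<times> {-1, 0, 1::int} \<times> Rset \<times> (UNIV :: bool set))"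
definition Qa' :: "nat set" where
  "Qa' = to_nat ` (Qa \<times> {-1, 0, 1::int} \<times> Rset \<times> {True})"

definition \<delta>' :: ca_trans where
  "\<delta>' code \<sigma> \<theta> = (case (from_nat code :: nat \<times> int \<times> int list \<times> bool) of (q, z, rs, f) \<Rightarrow>
     let s = snd (\<delta> q \<sigma> f) 0 0;
         ds = map (\<lambda>p. clip (qval p s)) ps;
         ws = map (\<lambda>i. wstep R K (\<theta> ! i) (rs ! i) (ds ! i)) [0..<n];
         z' = z * zs s;
         f' = (z' = 1 \<and> (\<forall>i<n. \<theta> ! i \<and> rs ! i + ds ! i = 0))
     in (to_nat (fst (\<delta> q \<sigma> f), z', map fst ws, f'), \<lambda>i. if i < n then snd (ws ! i) else 0))"

definition code0 :: nat where
  "code0 = to_nat (q0, zs x0, map (\<lambda>p. qval p x0) ps, x0 = 1)"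

definition Rel :: "nat \<times> (nat \<Rightarrow> int) \<Rightarrow> nat \<times> rat \<Rightarrow> bool" where
  "Rel c d \<longleftrightarrow> (\<exists>rs. fst c = to_nat (fst d, zs (snd d), rs, snd d = 1) \<and> fst d \<in> Q \<and> rs \<in> Rset \<and>
     (snd d \<noteq> 0 \<longrightarrow> (\<forall>i<n. winv R K (qval (ps ! i) (snd d)) (rs ! i) (snd c i)) \<and>
        (\<forall>p. prime p \<and> p \<notin> P \<longrightarrow> qval p (snd d) = 0)))"

lemma finS: "finite S"
  unfolding S_def using fin\<Sigma> dva unfolding is_rtDVA_def by (intro finite_imageI finite_cartesian_product) (auto simp: finite_tape_syms)

lemma finP: "finite P"
proof -
  have "P \<subseteq> (\<Union>s \<in> insert x0 S. {p. prime p \<and> qval p s \<noteq> 0})" unfolding P_def by auto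
  moreover have "finite (\<Union>s \<in> insert x0 S. {p. prime p \<and> qval p s \<noteq> 0})"
    using finS finite_qval_support by auto
  ultimately show ?thesis by (rule finite_subset)
qed

lemma set_ps: "set ps = P" and distinct_ps: "distinct ps"
  using finP by (auto simp: ps_def)

lemma ps_nth: "i < n \<Longrightarrow> ps ! i \<in> P" using set_ps by (auto simp: n_def)

lemma P_nth: "p \<in> P \<Longrightarrow> \<exists>i<n. ps ! i = p"
  using set_ps by (auto simp: n_def in_set_conv_nth)

lemma K_pos: "K \<ge> 1" unfolding K_def by (auto intro!: sum_nonneg)

lemma K_le_R: "K \<le> R" unfolding R_def by (auto intro!: sum_nonneg)

lemma S_bound: assumes "p \<in> P" "s \<in> S" shows "\<bar>qval p s\<bar> \<le> K"
proof -
  have "\<bar>qval p s\<bar> \<le> (\<Sum>s\<in>S. \<bar>qval p s\<bar>)" using assms finS by (intro member_le_sum) auto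
  also have "\<dots> \<le> (\<Sum>p\<in>P. \<Sum>s\<in>S. \<bar>qval p s\<bar>)" using assms finP
    by (intro member_le_sum[of p P "\<lambda>p. \<Sum>s\<in>S. \<bar>qval p s\<bar>"]) (auto intro: sum_nonneg)
  finally show ?thesis unfolding K_def by simp
qed

lemma x0_bound: assumes "p \<in> P" shows "\<bar>qval p x0\<bar> \<le> R"
proof -
  have "\<bar>qval p x0\<bar> \<le> (\<Sum>p\<in>P. \<bar>qval p x0\<bar>)" using assms finP by (intro member_le_sum) auto
  thus ?thesis unfolding R_def using K_pos by simp
qed

lemma S_out: assumes "prime p" "p \<notin> P" "s \<in> S" shows "qval p s = 0"
  using assms unfolding P_def by auto

lemma x0_out: assumes "prime p" "p \<notin> P" shows "qval p x0 = 0"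
  using assms unfolding P_def by auto

lemma sc_in_S: "q \<in> Q \<Longrightarrow> \<sigma> \<in> tape_syms \<Sigma> \<Longrightarrow> sc \<delta> q \<sigma> \<omega> \<in> S"
  unfolding S_def by (rule image_eqI[of _ _ "(q, \<sigma>, \<omega>)"]) auto

lemma clip_id: "\<bar>d\<bar> \<le> K \<Longrightarrow> clip d = d" by (auto simp: clip_def)
lemma clip_bound: "\<bar>clip d\<bar> \<le> K" using K_pos by (auto simp: clip_def)

lemma one_iff_qval:
  assumes "x \<noteq> 0"
  shows "x = 1 \<longleftrightarrow> x > 0 \<and> (\<forall>p. prime p \<longrightarrow> qval p x = 0)"
  using qval_one_iff qval_one by auto

lemma step_rel:
  assumes rel: "Rel (code, cnt) (q, x)" and \<sigma>: "\<sigma> \<in> tape_syms \<Sigma>"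
  shows "Rel (ca_step (Suc n) \<delta>' (code, cnt) \<sigma>) (sstep \<delta> (q, x) \<sigma>)"
proof -
  obtain rs where c: "code = to_nat (q, zs x, rs, x = 1)" and qQ: "q \<in> Q" and rsR: "rs \<in> Rset"
    and inv: "x \<noteq> 0 \<Longrightarrow> (\<forall>i<n. winv R K (qval (ps ! i) x) (rs ! i) (cnt i))"
    and out: "x \<noteq> 0 \<Longrightarrow> (\<forall>p. prime p \<and> p \<notin> P \<longrightarrow> qval p x = 0)"
    using rel unfolding Rel_def by auto
  define \<theta> where "\<theta> = map (\<lambda>i. cnt i = (0::int)) [0..<Suc n]"
  define s where "s = sc \<delta> q \<sigma> (x = 1)"
  define ds where "ds = map (\<lambda>p. clip (qval p s)) ps"
  define ws where "ws = map (\<lambda>i. wstep R K (\<theta> ! i) (rs ! i) (ds ! i)) [0..<n]"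
  define q' where "q' = fst (\<delta> q \<sigma> (x = 1))"
  define f' where "f' = (zs x * zs s = 1 \<and> (\<forall>i<n. \<theta> ! i \<and> rs ! i + ds ! i = 0))"
  have sS: "s \<in> S" unfolding s_def using qQ \<sigma> by (rule sc_in_S)
  have \<delta>'eq: "\<delta>' code \<sigma> \<theta> = (to_nat (q', zs x * zs s, map fst ws, f'), \<lambda>i. if i < n then snd (ws ! i) else 0)"
    unfolding ws_def ds_def s_def sc_def q'_def f'_def \<delta>'_def c by (simp add: Let_def)
  have ca: "ca_step (Suc n) \<delta>' (code, cnt) \<sigma> =
     (to_nat (q', zs x * zs s, map fst ws, f'), \<lambda>i. if i < Suc n then cnt i + (if i < n then snd (ws ! i) else 0) else cnt i)"
    unfolding ca_step_def using \<delta>'eq by (simp add: \<theta>_def)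
  have ss: "sstep \<delta> (q, x) \<sigma> = (q', x * s)" by (simp add: sstep_def q'_def s_def)
  have \<theta>i: "i < n \<Longrightarrow> \<theta> ! i = (cnt i = 0)" for i unfolding \<theta>_def by (simp add: nth_append)
  have dsi: "i < n \<Longrightarrow> ds ! i = qval (ps ! i) s" for i
    unfolding ds_def using clip_id S_bound[OF ps_nth sS] by (simp add: n_def)
  have wsi: "i < n \<Longrightarrow> ws ! i = wstep R K (cnt i = 0) (rs ! i) (qval (ps ! i) s)" for i
    unfolding ws_def using \<theta>i dsi by simp
  have rsb: "i < n \<Longrightarrow> \<bar>rs ! i\<bar> \<le> R" for i
  proof -
    assume i: "i < n"
    have "rs ! i \<in> set rs" using i rsR unfolding Rset_def by auto
    thus ?thesis using rsR unfolding Rset_def by (auto simp: abs_le_iff)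
  qed
  have sb: "i < n \<Longrightarrow> \<bar>qval (ps ! i) s\<bar> \<le> K" for i using S_bound[OF ps_nth sS] by simp
  have q'Q: "q' \<in> Q" using dva qQ \<sigma> unfolding q'_def is_rtDVA_def by auto
  have rs'R: "map fst ws \<in> Rset"
  proof -
    have "\<bar>fst (ws ! i)\<bar> \<le> R" if "i < n" for i
      using wstep_bounds[OF K_le_R rsb[OF that] sb[OF that]] wsi[OF that] by simp
    thus ?thesis unfolding Rset_def by (fastforce simp: ws_def in_set_conv_nth abs_le_iff)
  qed
  have f'eq: "f' = (x * s = 1)"
  proof (cases "x = 0 \<or> s = 0")
    case True
    thus ?thesis unfolding f'_def by (auto simp: zs_def)
  next
    case False
    hence x: "x \<noteq> 0" and s: "s \<noteq> 0" by auto
    have xs: "x * s \<noteq> 0" using x s by simp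
    have qm: "qval p (x * s) = qval p x + qval p s" if "prime p" for p using qval_mult[OF that x s] .
    have "(\<forall>p. prime p \<longrightarrow> qval p (x * s) = 0) \<longleftrightarrow> (\<forall>i<n. qval (ps ! i) x + qval (ps ! i) s = 0)"
    proof
      assume h: "\<forall>p. prime p \<longrightarrow> qval p (x * s) = 0"
      show "\<forall>i<n. qval (ps ! i) x + qval (ps ! i) s = 0"
        using h qm ps_nth unfolding P_def by auto
    next
      assume h: "\<forall>i<n. qval (ps ! i) x + qval (ps ! i) s = 0"
      show "\<forall>p. prime p \<longrightarrow> qval p (x * s) = 0"
      proof (intro allI impI)
        fix p :: int assume pp: "prime p"
        show "qval p (x * s) = 0"
        proof (cases "p \<in> P")
          case True
          then obtain i where "i < n" "ps ! i = p" using P_nth by blast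
          thus ?thesis using h qm[OF pp] by auto
        next
          case False
          thus ?thesis using out[OF x] S_out[OF pp False sS] qm[OF pp] pp by simp
        qed
      qed
    qed
    also have "\<dots> \<longleftrightarrow> (\<forall>i<n. \<theta> ! i \<and> rs ! i + ds ! i = 0)"
      using wstep_inv(2)[OF _ K_le_R inv[OF x, rule_format] sb] K_pos \<theta>i dsi by auto
    finally have e1: "(\<forall>p. prime p \<longrightarrow> qval p (x * s) = 0) \<longleftrightarrow> (\<forall>i<n. \<theta> ! i \<and> rs ! i + ds ! i = 0)" .
    have e2: "zs x * zs s = 1 \<longleftrightarrow> x * s > 0"
      using xs unfolding zs_mult[symmetric] by (auto simp: zs_def)
    show ?thesis unfolding f'_def using one_iff_qval[OF xs] e1 e2 by auto
  qed
  have invs: "x * s \<noteq> 0 \<Longrightarrow> (\<forall>i<n. winv R K (qval (ps ! i) (x * s)) (map fst ws ! i)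
      (cnt i + snd (ws ! i)))"
  proof (intro allI impI)
    fix i assume xs: "x * s \<noteq> 0" and i: "i < n"
    hence x: "x \<noteq> 0" and s: "s \<noteq> 0" by auto
    have "qval (ps ! i) (x * s) = qval (ps ! i) x + qval (ps ! i) s"
      using qval_mult[OF _ x s] ps_nth[OF i] unfolding P_def by auto
    thus "winv R K (qval (ps ! i) (x * s)) (map fst ws ! i) (cnt i + snd (ws ! i))"
      using wstep_inv(1)[OF _ K_le_R inv[OF x, rule_format, OF i] sb[OF i]] K_pos wsi[OF i] i
      by (simp add: ws_def)
  qed
  have outs: "x * s \<noteq> 0 \<Longrightarrow> (\<forall>p. prime p \<and> p \<notin> P \<longrightarrow> qval p (x * s) = 0)"
    using out S_out[OF _ _ sS] qval_mult by auto
  show ?thesis unfolding ca ss Rel_def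
    using q'Q rs'R f'eq invs outs zs_mult[of x s]
    by (intro exI[of _ "map fst ws"]) auto
qed

lemma run_rel:
  assumes "Rel c d" "set xs \<subseteq> tape_syms \<Sigma>"
  shows "Rel (foldl (ca_step (Suc n) \<delta>') c xs) (foldl (sstep \<delta>) d xs)"
  using assms
proof (induction xs arbitrary: c d)
  case Nil thus ?case by simp
next
  case (Cons a xs)
  have "Rel (ca_step (Suc n) \<delta>' c a) (sstep \<delta> d a)"
    using step_rel[of "fst c" "snd c" "fst d" "snd d" a] Cons.prems by simp
  thus ?case using Cons by simp
qed

lemma Rel_init: "Rel (code0, \<lambda>_. 0) (q0, x0)"
proof -
  have q0: "q0 \<in> Q" using dva by (simp add: is_rtDVA_def)
  have b: "\<bar>qval (ps ! i) x0\<bar> \<le> R" if "i < n" for i using x0_bound[OF ps_nth[OF that]] .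
  have "qval p x0 \<in> {-R..R}" if "p \<in> P" for p using x0_bound[OF that] by (simp add: abs_le_iff)
  hence "map (\<lambda>p. qval p x0) ps \<in> Rset"
    unfolding Rset_def using set_ps by (auto simp: n_def)
  moreover have "\<forall>i<n. winv R K (qval (ps ! i) x0) (map (\<lambda>p. qval p x0) ps ! i) 0"
    using b by (simp add: winv_def n_def)
  ultimately show ?thesis unfolding Rel_def code0_def using q0 x0_out
    by (intro exI[of _ "map (\<lambda>p. qval p x0) ps"]) auto
qed

lemma Rel_acc: "Rel (code, cnt) (q, x) \<Longrightarrow> code \<in> Qa' \<longleftrightarrow> q \<in> Qa \<and> x = 1"
  unfolding Rel_def Qa'_def using zs_range by (auto simp: inj_image_mem_iff[OF inj_to_nat])

lemma ws_bounds:
  assumes "rs \<in> Rset"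
  shows "map (\<lambda>i. fst (wstep R K (\<theta> ! i) (rs ! i) (clip (qval (ps ! i) s)))) [0..<n] \<in> Rset"
    and "i < n \<Longrightarrow> snd (wstep R K (\<theta> ! i) (rs ! i) (clip (qval (ps ! i) s))) \<in> {-1, 0, 1}"
proof -
  have rsb: "i < n \<Longrightarrow> \<bar>rs ! i\<bar> \<le> R" for i
  proof -
    assume i: "i < n"
    have "rs ! i \<in> set rs" using i assms unfolding Rset_def by auto
    thus ?thesis using assms unfolding Rset_def by (auto simp: abs_le_iff)
  qed
  have "\<bar>fst (wstep R K (\<theta> ! i) (rs ! i) (clip (qval (ps ! i) s)))\<bar> \<le> R" if "i < n" for i
    using wstep_bounds[OF K_le_R rsb[OF that] clip_bound] by simp
  thus "map (\<lambda>i. fst (wstep R K (\<theta> ! i) (rs ! i) (clip (qval (ps ! i) s)))) [0..<n] \<in> Rset"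
    unfolding Rset_def by (fastforce simp: in_set_conv_nth abs_le_iff)
  show "i < n \<Longrightarrow> snd (wstep R K (\<theta> ! i) (rs ! i) (clip (qval (ps ! i) s))) \<in> {-1, 0, 1}"
    using wstep_bounds[OF K_le_R rsb clip_bound] by blast
qed

lemma is_DCA: "is_rtDCA (Suc n) \<Sigma> Q' \<delta>' code0 Qa'"
  unfolding is_rtDCA_def
proof (intro conjI ballI allI impI)
  have fR: "finite Rset" unfolding Rset_def using finite_lists_length_eq[of "{-R..R}" n] by (simp add: conj_commute)
  show "finite Q'" unfolding Q'_def using dva fR
    by (intro finite_imageI finite_cartesian_product finite_lists_length_eq) (auto simp: is_rtDVA_def)
  show "code0 \<in> Q'" using Rel_init unfolding Rel_def Q'_def code0_def using zs_range by auto
  show "Qa' \<subseteq> Q'" unfolding Qa'_def Q'_def using dva by (auto simp: is_rtDVA_def)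
next
  fix code \<sigma> \<theta> assume c: "code \<in> Q'" and \<sigma>: "\<sigma> \<in> tape_syms \<Sigma>" and "length (\<theta>::bool list) = Suc n"
  obtain t where t: "t \<in> Q \<times> {-1, 0, 1::int} \<times> Rset \<times> (UNIV :: bool set)" "code = to_nat t"
    using c unfolding Q'_def by blast
  obtain q z rs f where tt: "t = (q, z, rs, f)" by (cases t) auto
  have ce: "code = to_nat (q, z, rs, f)" and qQ: "q \<in> Q" and z: "z \<in> {-1,0,1}" and rs: "rs \<in> Rset"
    using t tt by auto
  define s where "s = snd (\<delta> q \<sigma> f) 0 0"
  have e: "\<delta>' code \<sigma> \<theta> = (to_nat (fst (\<delta> q \<sigma> f), z * zs s,
      map (\<lambda>i. fst (wstep R K (\<theta> ! i) (rs ! i) (clip (qval (ps ! i) s)))) [0..<n],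
      z * zs s = 1 \<and> (\<forall>i<n. \<theta> ! i \<and> rs ! i + clip (qval (ps ! i) s) = 0)),
      \<lambda>i. if i < n then snd (wstep R K (\<theta> ! i) (rs ! i) (clip (qval (ps ! i) s))) else 0)"
    unfolding \<delta>'_def ce s_def by (auto simp: Let_def n_def fun_eq_iff)
  have zz: "z * zs s \<in> {-1, 0, 1}" using z zs_range[of s] by auto
  have "fst (\<delta> q \<sigma> f) \<in> Q" using dva qQ \<sigma> by (auto simp: is_rtDVA_def)
  thus "fst (\<delta>' code \<sigma> \<theta>) \<in> Q'" unfolding e Q'_def using zz ws_bounds(1)[OF rs] by auto
  fix i assume "i < Suc n"
  thus "snd (\<delta>' code \<sigma> \<theta>) i \<in> {-1, 0, 1}" unfolding e using ws_bounds(2)[OF rs] by auto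
qed

lemma lang_eq:
  assumes "w \<in> lists \<Sigma>" and that: "v 0 = x0"
  shows "ca_accepts (Suc n) \<delta>' code0 Qa' w \<longleftrightarrow> dva_accepts 1 \<delta> q0 Qa v w"
proof -
  have r: "Rel (foldl (ca_step (Suc n) \<delta>') (code0, \<lambda>_. 0) (tape w)) (foldl (sstep \<delta>) (q0, x0) (tape w))"
    using run_rel[OF Rel_init tape_syms_tape[OF assms(1)]] .
  show ?thesis unfolding ca_accepts_def dva_accepts_sstep that
    using Rel_acc[of "fst (foldl (ca_step (Suc n) \<delta>') (code0, \<lambda>_. 0) (tape w))"
       "snd (foldl (ca_step (Suc n) \<delta>') (code0, \<lambda>_. 0) (tape w))"
       "fst (foldl (sstep \<delta>) (q0, x0) (tape w))" "snd (foldl (sstep \<delta>) (q0, x0) (tape w))"] r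
    by simp
qed


end




definition Lw :: "nat list set" where
  "Lw = {replicate n 0 @ replicate m 1 @ replicate k 2 | n m k. k = m \<or> k = m + n}"

definition \<Sigma>w :: "nat set" where "\<Sigma>w = {0, 1, 2}"

definition inc :: "nat \<Rightarrow> int \<Rightarrow> nat \<Rightarrow> int" where
  "inc j a = (\<lambda>i. if i = j then a else 0)"

definition \<delta>2 :: ca_trans where
  "\<delta>2 q \<sigma> \<theta> = (case \<sigma> of
     Cent \<Rightarrow> (if q = 0 then 0 else 4, \<lambda>_. 0)
   | Sym x \<Rightarrow> (if x = 0 then (if q = 0 then (0, inc 0 1) else (4, \<lambda>_. 0))
       else if x = 1 then (if q \<le> 1 then (1, inc 1 1) else (4, \<lambda>_. 0))
       else if x = 2 \<and> q \<le> 3 then (if q = 3 \<or> \<theta> ! 1 then (3, inc 0 (-1)) else (2, inc 1 (-1)))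
       else (4, \<lambda>_. 0))
   | Dollar \<Rightarrow> (if (q \<le> 2 \<and> \<theta> ! 1) \<or> (q = 3 \<and> \<theta> ! 0) then 5 else 4, \<lambda>_. 0))"

definition C :: "int \<Rightarrow> int \<Rightarrow> nat \<Rightarrow> int" where
  "C a b = (\<lambda>i. if i = 0 then a else if i = 1 then b else 0)"

lemma ca_step_C: "ca_step 2 \<delta> (q, C a b) \<sigma> =
   (fst (\<delta> q \<sigma> [a = 0, b = 0]), C (a + snd (\<delta> q \<sigma> [a = 0, b = 0]) 0) (b + snd (\<delta> q \<sigma> [a = 0, b = 0]) 1))"
  by (cases "\<delta> q \<sigma> [a = 0, b = 0]") (auto simp: ca_step_def C_def fun_eq_iff numeral_2_eq_2 upt_rec)

lemma C00: "(\<lambda>_. 0) = C 0 0" by (auto simp: C_def)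

lemma R0: "foldl (ca_step 2 \<delta>2) (0, C a 0) (map Sym (replicate n 0)) = (0, C (a + int n) 0)"
proof (induction n arbitrary: a)
  case 0 thus ?case by simp
next
  case (Suc n)
  have "ca_step 2 \<delta>2 (0, C a 0) (Sym 0) = (0, C (a + 1) 0)"
    by (simp add: ca_step_C \<delta>2_def inc_def)
  thus ?case using Suc[of "a+1"] by (simp add: algebra_simps)
qed

lemma R1: "q \<le> 1 \<Longrightarrow> foldl (ca_step 2 \<delta>2) (q, C a b) (map Sym (replicate m 1)) = (if m = 0 then q else 1, C a (b + int m))"
proof (induction m arbitrary: q b)
  case 0 thus ?case by simp
next
  case (Suc m)
  have "ca_step 2 \<delta>2 (q, C a b) (Sym 1) = (1, C a (b + 1))"
    using Suc.prems by (simp add: ca_step_C \<delta>2_def inc_def)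
  thus ?case using Suc.IH[of 1 "b+1"] by (simp add: algebra_simps)
qed

lemma R2: "q \<le> 2 \<Longrightarrow> int j \<le> b \<Longrightarrow> foldl (ca_step 2 \<delta>2) (q, C a b) (map Sym (replicate j 2)) = (if j = 0 then q else 2, C a (b - int j))"
proof (induction j arbitrary: q b)
  case 0 thus ?case by simp
next
  case (Suc j)
  have "ca_step 2 \<delta>2 (q, C a b) (Sym 2) = (2, C a (b - 1))"
    using Suc.prems by (simp add: ca_step_C \<delta>2_def inc_def)
  thus ?case using Suc.IH[of 2 "b-1"] Suc.prems by (simp add: algebra_simps)
qed

lemma R3: "q \<le> 3 \<Longrightarrow> foldl (ca_step 2 \<delta>2) (q, C a 0) (map Sym (replicate j 2)) = (if j = 0 then q else 3, C (a - int j) 0)"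
proof (induction j arbitrary: q a)
  case 0 thus ?case by simp
next
  case (Suc j)
  have "ca_step 2 \<delta>2 (q, C a 0) (Sym 2) = (3, C (a - 1) 0)"
    using Suc.prems by (simp add: ca_step_C \<delta>2_def inc_def)
  thus ?case using Suc.IH[of 3 "a-1"] Suc.prems by (simp add: algebra_simps)
qed

lemma acc_sorted:
  "ca_accepts 2 \<delta>2 0 {5} (replicate n 0 @ replicate m 1 @ replicate k 2) \<longleftrightarrow> (k = m \<or> k = m + n)"
proof -
  have c: "ca_step 2 \<delta>2 (0, C 0 0) Cent = (0, C 0 0)" by (simp add: ca_step_C \<delta>2_def)
  obtain q1 where q1: "foldl (ca_step 2 \<delta>2) (0, C 0 0) (Cent # map Sym (replicate n 0 @ replicate m 1)) = (q1, C (int n) (int m))" "q1 \<le> 1"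
    using c R0[of 0 n] R1[of 0 "int n" 0 m] by auto
  show ?thesis
  proof (cases "k \<le> m")
    case True
    obtain q2 where q2: "foldl (ca_step 2 \<delta>2) (q1, C (int n) (int m)) (map Sym (replicate k 2)) = (q2, C (int n) (int m - int k))" "q2 \<le> 2"
      using R2[of q1 k "int m" "int n"] q1(2) True by auto
    have "ca_step 2 \<delta>2 (q2, C (int n) (int m - int k)) Dollar = (if k = m then 5 else 4, C (int n) (int m - int k))"
      using q2(2) True by (auto simp: ca_step_C \<delta>2_def)
    thus ?thesis unfolding ca_accepts_def tape_def using q1 q2 True C00 by (auto simp: foldl_append)
  next
    case False
    obtain q2 where q2: "foldl (ca_step 2 \<delta>2) (q1, C (int n) (int m)) (map Sym (replicate m 2)) = (q2, C (int n) 0)" "q2 \<le> 2"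
      using R2[of q1 m "int m" "int n"] q1(2) by auto
    have q3: "foldl (ca_step 2 \<delta>2) (q2, C (int n) 0) (map Sym (replicate (k - m) 2)) = (3, C (int n - int (k - m)) 0)"
      using R3[of q2 "int n" "k - m"] q2(2) False by auto
    have rk: "replicate k (2::nat) = replicate m 2 @ replicate (k - m) 2"
      using False by (simp add: replicate_add[symmetric])
    have "ca_step 2 \<delta>2 (3, C (int n - int (k - m)) 0) Dollar = (if k = m + n then 5 else 4, C (int n - int (k - m)) 0)"
      using False by (auto simp: ca_step_C \<delta>2_def)
    thus ?thesis unfolding ca_accepts_def tape_def using q1 q2 q3 False C00 rk by (auto simp: foldl_append)
  qed
qed

definition Scls :: "nat \<Rightarrow> nat set" where
  "Scls x = (if x = 0 then {0, 4} else if x = 1 then {1, 4} else {2, 3, 4})"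

lemma \<delta>2_Scls: "x \<in> \<Sigma>w \<Longrightarrow> fst (\<delta>2 q (Sym x) \<theta>) \<in> Scls x"
  by (auto simp: \<delta>2_def Scls_def \<Sigma>w_def)

lemma \<delta>2_desc: "q \<in> Scls x \<Longrightarrow> y < x \<Longrightarrow> x \<in> \<Sigma>w \<Longrightarrow> fst (\<delta>2 q (Sym y) \<theta>) = 4"
  by (auto simp: \<delta>2_def Scls_def \<Sigma>w_def)

lemma \<delta>2_dead: "fst (\<delta>2 4 \<sigma> \<theta>) = 4"
  by (cases \<sigma>) (auto simp: \<delta>2_def)

lemma fst_ca_step: "fst (ca_step k \<delta> c \<sigma>) = fst (\<delta> (fst c) \<sigma> (map (\<lambda>i. snd c i = 0) [0..<k]))"
  by (cases c; cases "\<delta> (fst c) \<sigma> (map (\<lambda>i. snd c i = 0) [0..<k])") (simp add: ca_step_def)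

lemma dead_run: "fst c = 4 \<Longrightarrow> fst (foldl (ca_step 2 \<delta>2) c xs) = 4"
proof (induction xs arbitrary: c)
  case Nil thus ?case by simp
next
  case (Cons a xs)
  have "fst (ca_step 2 \<delta>2 c a) = 4" using Cons.prems \<delta>2_dead
    by (simp add: fst_ca_step)
  thus ?case using Cons.IH by simp
qed

lemma acc_unsorted:
  assumes w: "w = u @ x # y # v" and yx: "y < x" and x: "x \<in> \<Sigma>w"
  shows "\<not> ca_accepts 2 \<delta>2 0 {5} w"
proof -
  define c1 where "c1 = foldl (ca_step 2 \<delta>2) (0, \<lambda>_. 0) (Cent # map Sym u)"
  have s1: "fst (ca_step 2 \<delta>2 c1 (Sym x)) \<in> Scls x" unfolding fst_ca_step using \<delta>2_Scls[OF x] .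
  have s2: "fst (ca_step 2 \<delta>2 (ca_step 2 \<delta>2 c1 (Sym x)) (Sym y)) = 4"
    unfolding fst_ca_step[of 2 \<delta>2 "ca_step 2 \<delta>2 c1 (Sym x)"] using \<delta>2_desc[OF s1[unfolded fst_ca_step] yx x] 
    by (simp add: fst_ca_step)
  have "fst (foldl (ca_step 2 \<delta>2) (0, \<lambda>_. 0) (tape w)) =
     fst (foldl (ca_step 2 \<delta>2) (ca_step 2 \<delta>2 (ca_step 2 \<delta>2 c1 (Sym x)) (Sym y)) (map Sym v @ [Dollar]))"
    unfolding w tape_def c1_def by simp
  also have "\<dots> = 4" using dead_run s2 by blast
  finally show ?thesis unfolding ca_accepts_def by simp
qed

lemma sorted_form:
  "sorted w \<Longrightarrow> set w \<subseteq> \<Sigma>w \<Longrightarrow> \<exists>n m k. w = replicate n 0 @ replicate m 1 @ replicate k 2"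
proof (induction w)
  case Nil thus ?case by (intro exI[of _ 0]) simp
next
  case (Cons a w)
  then obtain n m k where e: "w = replicate n 0 @ replicate m 1 @ replicate k 2" by auto
  have ge: "\<forall>b\<in>set w. a \<le> b" using Cons.prems by simp
  have a: "a \<in> \<Sigma>w" using Cons.prems by simp
  consider "a = 0" | "a = 1" | "a = 2" using a by (auto simp: \<Sigma>w_def)
  thus ?case
  proof cases
    case 1 thus ?thesis using e by (intro exI[of _ "Suc n"] exI[of _ m] exI[of _ k]) simp
  next
    case 2
    hence "n = 0" using ge e by (cases n) auto
    thus ?thesis using e 2 by (intro exI[of _ 0] exI[of _ "Suc m"] exI[of _ k]) simp
  next
    case 3
    hence "n = 0" "m = 0" using ge e by (cases n; cases m; auto)+
    thus ?thesis using e 3 by (intro exI[of _ 0] exI[of _ 0] exI[of _ "Suc k"]) simp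
  qed
qed

lemma unsorted_split:
  assumes "\<not> sorted (w :: nat list)"
  shows "\<exists>u x y v. w = u @ x # y # v \<and> y < x"
proof -
  obtain i where i: "Suc i < length w" "w ! Suc i < w ! i"
    using assms unfolding sorted_iff_nth_Suc by (auto simp: not_le)
  have "w = take i w @ drop i w" by simp
  also have "drop i w = w ! i # drop (Suc i) w" using i by (simp add: Cons_nth_drop_Suc)
  also have "drop (Suc i) w = w ! Suc i # drop (Suc (Suc i)) w" using i by (simp add: Cons_nth_drop_Suc)
  finally show ?thesis using i by blast
qed

lemma Lw_lists: "Lw \<subseteq> lists \<Sigma>w" unfolding Lw_def \<Sigma>w_def by auto

lemma lang_w: "{w \<in> lists \<Sigma>w. ca_accepts 2 \<delta>2 0 {5} w} = Lw"
proof (intro set_eqI iffI)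
  fix w assume "w \<in> {w \<in> lists \<Sigma>w. ca_accepts 2 \<delta>2 0 {5} w}"
  hence wl: "w \<in> lists \<Sigma>w" and acc: "ca_accepts 2 \<delta>2 0 {5} w" by auto
  have "sorted w"
  proof (rule ccontr)
    assume "\<not> sorted w"
    then obtain u x y v where e: "w = u @ x # y # v" "y < x" using unsorted_split by blast
    have "x \<in> \<Sigma>w" using wl e by auto
    thus False using acc_unsorted[OF e] acc by blast
  qed
  then obtain n m k where e: "w = replicate n 0 @ replicate m 1 @ replicate k 2"
    using sorted_form wl by blast
  thus "w \<in> Lw" using acc acc_sorted unfolding Lw_def by blast
next
  fix w assume "w \<in> Lw"
  then obtain n m k where e: "w = replicate n 0 @ replicate m 1 @ replicate k 2" "k = m \<or> k = m + n"
    unfolding Lw_def by blast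
  thus "w \<in> {w \<in> lists \<Sigma>w. ca_accepts 2 \<delta>2 0 {5} w}"
    using acc_sorted Lw_lists \<open>w \<in> Lw\<close> by blast
qed

lemma is_DCA2: "is_rtDCA 2 \<Sigma>w {0..5} \<delta>2 0 {5}"
  unfolding is_rtDCA_def
proof (intro conjI ballI allI impI)
  fix q \<sigma> \<theta> and i :: nat assume "\<sigma> \<in> tape_syms \<Sigma>w"
  show "fst (\<delta>2 q \<sigma> \<theta>) \<in> {0..5}" by (cases \<sigma>) (auto simp: \<delta>2_def)
  assume "i < 2"
  show "snd (\<delta>2 q \<sigma> \<theta>) i \<in> {-1, 0, 1}" by (cases \<sigma>) (auto simp: \<delta>2_def inc_def)
qed auto

lemma Lw_in_DCA: "(\<Sigma>w, Lw) \<in> L_rtDCA 2"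
  unfolding L_rtDCA_def using is_DCA2 lang_w[symmetric] by (auto simp: \<Sigma>w_def)




definition G :: "dva_trans \<Rightarrow> nat \<times> rat \<Rightarrow> nat \<Rightarrow> nat \<times> rat" where
  "G \<delta> c j = foldl (sstep \<delta>) c (replicate j (Sym 2))"

fun pst :: "dva_trans \<Rightarrow> nat \<Rightarrow> nat \<Rightarrow> nat" where
  "pst \<delta> q 0 = q"
| "pst \<delta> q (Suc j) = fst (\<delta> (pst \<delta> q j) (Sym 2) False)"

definition Pr :: "dva_trans \<Rightarrow> nat \<Rightarrow> nat \<Rightarrow> rat" where
  "Pr \<delta> q j = (\<Prod>i<j. sc \<delta> (pst \<delta> q i) (Sym 2) False)"

definition accd :: "dva_trans \<Rightarrow> nat set \<Rightarrow> nat \<times> rat \<Rightarrow> bool" where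
  "accd \<delta> Qa c \<longleftrightarrow> fst (sstep \<delta> c Dollar) \<in> Qa \<and> snd (sstep \<delta> c Dollar) = 1"

definition Pred :: "dva_trans \<Rightarrow> nat set \<Rightarrow> nat \<times> rat \<Rightarrow> nat \<Rightarrow> bool" where
  "Pred \<delta> Qa c j \<longleftrightarrow> snd (G \<delta> c j) = 1 \<or> accd \<delta> Qa (G \<delta> c j)"

definition gfun :: "dva_trans \<Rightarrow> nat \<Rightarrow> nat \<Rightarrow> bool \<Rightarrow> rat" where
  "gfun \<delta> q t b = (if b then inverse (Pr \<delta> q t) else inverse (Pr \<delta> q t * sc \<delta> (pst \<delta> q t) Dollar False))"

lemma G_Suc: "G \<delta> c (Suc j) = sstep \<delta> (G \<delta> c j) (Sym 2)"
proof -
  have "replicate (Suc j) (Sym 2) = replicate j (Sym (2::nat)) @ [Sym 2]" by (simp add: replicate_append_same)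
  thus ?thesis unfolding G_def by simp
qed

lemma G_free: "(\<forall>i<j. snd (G \<delta> c i) \<noteq> 1) \<Longrightarrow> G \<delta> c j = (pst \<delta> (fst c) j, snd c * Pr \<delta> (fst c) j)"
proof (induction j)
  case 0 thus ?case by (simp add: G_def Pr_def)
next
  case (Suc j)
  hence ih: "G \<delta> c j = (pst \<delta> (fst c) j, snd c * Pr \<delta> (fst c) j)" by auto
  have ne: "snd (G \<delta> c j) \<noteq> 1" using Suc.prems by auto
  show ?case unfolding G_Suc using ih ne by (simp add: sstep_def Pr_def sc_def mult.assoc)
qed

lemma determ:
  assumes "Pred \<delta> Qa c j"
  defines "t \<equiv> LEAST j. Pred \<delta> Qa c j"
  shows "snd c = gfun \<delta> (fst c) t (snd (G \<delta> c t) = 1)"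
proof -
  have pt: "Pred \<delta> Qa c t" unfolding t_def using assms(1) by (rule LeastI)
  have "\<not> Pred \<delta> Qa c i" if "i < t" for i using not_less_Least[OF that[unfolded t_def]] t_def by simp
  hence "\<forall>i<t. snd (G \<delta> c i) \<noteq> 1" unfolding Pred_def by auto
  hence g: "G \<delta> c t = (pst \<delta> (fst c) t, snd c * Pr \<delta> (fst c) t)" by (rule G_free)
  show ?thesis
  proof (cases "snd (G \<delta> c t) = 1")
    case True
    hence "snd c * Pr \<delta> (fst c) t = 1" using g by simp
    hence "Pr \<delta> (fst c) t * snd c = 1" by (simp add: mult.commute)
    hence "snd c = inverse (Pr \<delta> (fst c) t)" by (metis Fields.inverse_unique)
    thus ?thesis using True by (simp add: gfun_def)
  next
    case False
    hence "accd \<delta> Qa (G \<delta> c t)" using pt unfolding Pred_def by simp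
    hence "snd c * Pr \<delta> (fst c) t * sc \<delta> (pst \<delta> (fst c) t) Dollar False = 1"
      using g False by (simp add: accd_def sstep_def)
    hence "(Pr \<delta> (fst c) t * sc \<delta> (pst \<delta> (fst c) t) Dollar False) * snd c = 1"
      by (simp add: algebra_simps)
    hence "snd c = inverse (Pr \<delta> (fst c) t * sc \<delta> (pst \<delta> (fst c) t) Dollar False)"
      by (metis Fields.inverse_unique)
    thus ?thesis using False by (simp add: gfun_def)
  qed
qed

lemma count_rep: "count_list (replicate n x) y = (if x = y then n else 0)"
  by (induction n) auto

lemma pair_inj:
  fixes n m n' m' :: nat
  assumes "\<forall>k. (k = m \<or> k = m + n) \<longleftrightarrow> (k = m' \<or> k = m' + n')"
  shows "n = n' \<and> m = m'"
proof -
  have "m = m' \<or> m = m' + n'" "m' = m \<or> m' = m + n" "m + n = m' \<or> m + n = m' + n'" "m' + n' = m \<or> m' + n' = m + n"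
    using assms by blast+
  thus ?thesis by arith
qed

lemma not_DVA: "(\<Sigma>w, Lw) \<notin> L_rtDVA 1"
proof
  assume "(\<Sigma>w, Lw) \<in> L_rtDVA 1"
  then obtain Q \<delta> q0 Qa v where dva: "is_rtDVA 1 \<Sigma>w Q \<delta> q0 Qa"
    and L: "Lw = {w \<in> lists \<Sigma>w. dva_accepts 1 \<delta> q0 Qa v w}"
    unfolding L_rtDVA_def by blast
  define F where "F n m = foldl (sstep \<delta>) (q0, v 0) (Cent # map Sym (replicate n (0::nat) @ replicate m 1))" for n m
  have acc: "(k = m \<or> k = m + n) \<longleftrightarrow> accd \<delta> Qa (G \<delta> (F n m) k)" for n m k
  proof -
    define w where "w = replicate n (0::nat) @ replicate m 1 @ replicate k 2"
    have wl: "w \<in> lists \<Sigma>w" unfolding w_def \<Sigma>w_def by auto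
    have "w \<in> Lw \<longleftrightarrow> (k = m \<or> k = m + n)"
    proof
      assume "w \<in> Lw"
      then obtain n' m' k' where e: "w = replicate n' 0 @ replicate m' 1 @ replicate k' 2" "k' = m' \<or> k' = m' + n'"
        unfolding Lw_def by blast
      have "count_list w 0 = n" "count_list w 1 = m" "count_list w 2 = k" unfolding w_def by (simp_all add: count_list_append count_rep)
      moreover have "count_list w 0 = n'" "count_list w 1 = m'" "count_list w 2 = k'" unfolding e by (simp_all add: count_list_append count_rep)
      ultimately show "k = m \<or> k = m + n" using e(2) by simp
    next
      assume "k = m \<or> k = m + n" thus "w \<in> Lw" unfolding Lw_def w_def by blast
    qed
    moreover have "w \<in> Lw \<longleftrightarrow> dva_accepts 1 \<delta> q0 Qa v w" using L wl by blast
    moreover have "tape w = (Cent # map Sym (replicate n (0::nat) @ replicate m 1)) @ (replicate k (Sym 2) @ [Dollar])"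
      unfolding tape_def w_def by simp
    ultimately show ?thesis unfolding dva_accepts_sstep F_def G_def accd_def by (simp add: foldl_append)
  qed
  have pred: "Pred \<delta> Qa (F n m) m" for n m using acc[of m m n] unfolding Pred_def by simp
  define T where "T c = (LEAST j. Pred \<delta> Qa c j)" for c
  define \<Phi> where "\<Phi> c = (fst c, T c, snd (G \<delta> c (T c)) = 1)" for c
  have Tle: "T (F n m) \<le> m" for n m unfolding T_def by (rule Least_le) (rule pred)
  have FQ: "fst (F n m) \<in> Q" for n m
  proof -
    have "fst (foldl (sstep \<delta>) (q0, v 0) (Cent # map Sym (replicate n (0::nat) @ replicate m 1))) \<in> Q"
      using dva by (intro sstep_closed[OF dva]) (auto simp: is_rtDVA_def tape_syms_def \<Sigma>w_def)
    thus ?thesis unfolding F_def .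
  qed
  define N where "N = 2 * card Q"
  have finQ: "finite Q" using dva by (simp add: is_rtDVA_def)
  have inj: "inj_on (\<lambda>(n, m). \<Phi> (F n m)) ({0..N} \<times> {0..N})"
  proof (rule inj_onI, clarify)
    fix n m n' m' assume e: "\<Phi> (F n m) = \<Phi> (F n' m')"
    have h: "snd (F a b) = gfun \<delta> (fst (\<Phi> (F a b))) (fst (snd (\<Phi> (F a b)))) (snd (snd (\<Phi> (F a b))))" for a b
      using determ[OF pred[of a b]] unfolding T_def \<Phi>_def by simp
    have e1: "fst (F n m) = fst (F n' m')" using e unfolding \<Phi>_def by simp
    have "snd (F n m) = snd (F n' m')" using h[of n m] h[of n' m'] e by simp
    hence "F n m = F n' m'" using e1 by (simp add: prod_eq_iff)
    hence "\<forall>k. (k = m \<or> k = m + n) \<longleftrightarrow> (k = m' \<or> k = m' + n')" using acc by simp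
    thus "n = n' \<and> m = m'" by (rule pair_inj)
  qed
  have sub: "(\<lambda>(n, m). \<Phi> (F n m)) ` ({0..N} \<times> {0..N}) \<subseteq> Q \<times> {0..N} \<times> (UNIV :: bool set)"
  proof (rule subsetI)
    fix y assume "y \<in> (\<lambda>(n, m). \<Phi> (F n m)) ` ({0..N} \<times> {0..N})"
    then obtain n m where nm: "m \<le> N" "y = \<Phi> (F n m)" by auto
    have "T (F n m) \<le> N" using Tle[of n m] nm(1) by linarith
    thus "y \<in> Q \<times> {0..N} \<times> (UNIV :: bool set)" using FQ[of n m] nm unfolding \<Phi>_def by simp
  qed
  have "card ({0..N} \<times> {0..N}) \<le> card (Q \<times> {0..N} \<times> (UNIV :: bool set))"
    using card_inj_on_le[OF inj sub] finQ by simp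
  hence "(N + 1) * (N + 1) \<le> card Q * ((N + 1) * 2)" by (simp add: card_cartesian_product)
  hence "(N + 1) * (N + 1) \<le> N * (N + 1)" unfolding N_def by (simp add: algebra_simps)
  thus False by simp
qed



theorem theorem5:
  shows "L_rtDVA 1 \<subset> (\<Union>k\<in>{1..}. L_rtDCA k)"
proof
  show "L_rtDVA 1 \<subseteq> (\<Union>k\<in>{1..}. L_rtDCA k)"
  proof
    fix x assume x: "x \<in> L_rtDVA 1"
    obtain \<Sigma> L where xe: "x = (\<Sigma>, L)" by (cases x)
    then obtain Q \<delta> q0 Qa v where fin: "finite \<Sigma>" "\<Sigma> \<noteq> {}" and dva: "is_rtDVA 1 \<Sigma> Q \<delta> q0 Qa"
      and L: "L = {w \<in> lists \<Sigma>. dva_accepts 1 \<delta> q0 Qa v w}"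
      using x unfolding L_rtDVA_def by blast
    interpret S: sim \<Sigma> Q \<delta> q0 Qa "v 0" using fin dva by unfold_locales
    have "L = {w \<in> lists \<Sigma>. ca_accepts (Suc S.n) S.\<delta>' S.code0 S.Qa' w}"
      unfolding L using S.lang_eq by auto
    hence "(\<Sigma>, L) \<in> L_rtDCA (Suc S.n)"
      unfolding L_rtDCA_def using fin S.is_DCA by blast
    thus "x \<in> (\<Union>k\<in>{1..}. L_rtDCA k)" using xe by auto
  qed
  show "L_rtDVA 1 \<noteq> (\<Union>k\<in>{1..}. L_rtDCA k)"
    using Lw_in_DCA not_DVA by fastforce
qed

end
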